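(* Let $S,T$ be numerical semigroups such that $\mathrm H_S(x^w)f(x)=\mathrm H_T(x)$ for some integer $w\ge1$ and some polynomial $f$ with nonnegative integer coefficients. Put $Q(x)=\mathrm P_T(x)/\mathrm P_S(x^w)$. Then $Q(0)=1$, $Q(x)$ is a monic polynomial, and its nonzero coefficients alternate between $1$ and $-1$.
   Context: A numerical semigroup is a submonoid $S$ of $(\mathbb N,+)$ with finite complement in $\mathbb N$. $\mathrm H_S(x)=\sum_{s\in S}x^s$ and $\mathrm P_S(x)=(1-x)\mathrm H_S(x)$. *)

theory Defs
  imports "HOL-Computational_Algebra.Computational_Algebra"
begin

definition numerical_semigroup :: "nat set \<Rightarrow> bool" where
  "numerical_semigroup S \<longleftrightarrow> 0 \<in> S \<and> (\<forall>a\<in>S. \<forall>b\<in>S. a + b \<in> S) \<and> finite (UNIV - S)"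

definition hilbert_series :: "nat set \<Rightarrow> int fps" where
  "hilbert_series S = Abs_fps (\<lambda>n. if n \<in> S then 1 else 0)"

definition semigroup_poly :: "nat set \<Rightarrow> int fps" where
  "semigroup_poly S = (1 - fps_X) * hilbert_series S"

end

theory Submission
  imports Defs
begin

lemma compose_Xpow_nth:
  fixes a :: "'a::comm_ring_1 fps"
  shows "(a oo fps_X ^ w) $ n = (if w dvd n then a $ (n div w) else 0)"
proof -
  have "(a oo fps_X ^ w) $ n = (\<Sum>i=0..n. a$i * (if n = w*i then 1 else 0))"
    by (simp add: fps_compose_nth power_mult[symmetric] mult.commute)
  also have "\<dots> = (if w dvd n then a $ (n div w) else 0)"
  proof (cases "w dvd n")
    case True
    then obtain k where k: "n = w*k" by auto
    show ?thesis
    proof (cases "w = 0")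
      case True thus ?thesis using k by (simp add: sum.delta')
    next
      case False
      hence "k \<le> n" using k by simp
      have "(\<Sum>i=0..n. a$i * (if n = w*i then 1 else 0)) = (\<Sum>i=0..n. if i = k then a$i else 0)"
        using k False by (intro sum.cong) auto
      thus ?thesis using True k False \<open>k \<le> n\<close> by (simp add: sum.delta')
    qed
  next
    case False
    thus ?thesis by (intro trans[OF sum.neutral]) auto
  qed
  finally show ?thesis .
qed

lemma ns_large:
  assumes "numerical_semigroup S"
  obtains c where "\<forall>m\<ge>c. m \<in> S"
proof -
  have fin: "finite (UNIV - S)" using assms unfolding numerical_semigroup_def by auto
  obtain c where "\<forall>m\<in>UNIV - S. m < c"
    using finite_nat_bounded[OF fin] by (auto simp: lessThan_def)
  hence "\<forall>m\<ge>c. m \<in> S" using not_le by blast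
  thus ?thesis using that by blast
qed

theorem theorem5:
  fixes S T :: "nat set" and w :: nat and f :: "int poly"
  assumes "numerical_semigroup S" and "numerical_semigroup T"
    and "w \<ge> 1"
    and "\<forall>i. coeff f i \<ge> 0"
    and "fps_compose (hilbert_series S) (fps_X ^ w) * fps_of_poly f = hilbert_series T"
  shows "\<exists>Q :: int poly.
           fps_of_poly Q * fps_compose (semigroup_poly S) (fps_X ^ w) = semigroup_poly T
         \<and> poly Q 0 = 1
         \<and> lead_coeff Q = 1
         \<and> (\<forall>i. coeff Q i \<noteq> 0 \<longrightarrow> coeff Q i = 1 \<or> coeff Q i = -1)
         \<and> (\<forall>i j. i < j \<longrightarrow> coeff Q i \<noteq> 0 \<longrightarrow> coeff Q j \<noteq> 0 \<longrightarrow>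
                 (\<forall>k. i < k \<and> k < j \<longrightarrow> coeff Q k = 0) \<longrightarrow> coeff Q j = - coeff Q i)"
proof -
  note S = assms(1) and T = assms(2) and w = assms(3) and fpos = assms(4) and eq = assms(5)
  define fc where "fc = coeff f"
  define h where "h n = (if w dvd n \<and> n div w \<in> S then 1 else (0::int))" for n
  define HT where "HT n = (if n \<in> T then 1 else (0::int))" for n
  have hS: "(hilbert_series S oo fps_X ^ w) $ n = h n" for n
    by (simp add: compose_Xpow_nth hilbert_series_def h_def)
  have HTn: "HT n = (\<Sum>i=0..n. h i * fc (n - i))" for n
  proof -
    have "HT n = hilbert_series T $ n" by (simp add: HT_def hilbert_series_def)
    also have "\<dots> = (\<Sum>i=0..n. h i * fc (n - i))"
      unfolding eq[symmetric] fps_mult_nth hS fc_def by simp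
    finally show ?thesis .
  qed
  have fc0: "fc n \<ge> 0" for n using fpos fc_def by simp
  have h01: "0 \<le> h n \<and> h n \<le> 1" for n by (simp add: h_def)
  obtain cS where cS: "\<forall>m\<ge>cS. m \<in> S" using ns_large[OF S] by blast
  obtain cT where cT: "\<forall>m\<ge>cT. m \<in> T" using ns_large[OF T] by blast
  define g where "g n = (\<Sum>k\<le>n div w. fc (n - w*k))" for n
  have inj: "inj_on (\<lambda>k. w*k) A" for A using w by (auto simp: inj_on_def)
  have gle: "g n \<le> 1" for n
  proof -
    let ?I = "(\<lambda>k. w*(k+cS)) ` {..n div w}"
    have sub: "?I \<subseteq> {0..n + w*cS}"
    proof
      fix i assume "i \<in> ?I"
      then obtain k where k: "k \<le> n div w" "i = w*(k+cS)" by auto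
      have "w*k \<le> w*(n div w)" using k by simp
      also have "\<dots> \<le> n" by simp
      finally show "i \<in> {0..n + w*cS}" using k by (simp add: algebra_simps)
    qed
    have injI: "inj_on (\<lambda>k. w*(k+cS)) {..n div w}" using w by (auto simp: inj_on_def)
    have "g n = (\<Sum>k\<le>n div w. h (w*(k+cS)) * fc (n + w*cS - w*(k+cS)))"
    proof (unfold g_def, intro sum.cong refl)
      fix k assume k: "k \<in> {..n div w}"
      have "w*k \<le> w*(n div w)" using k by simp
      also have "\<dots> \<le> n" by simp
      finally have "n + w*cS - w*(k+cS) = n - w*k" by (simp add: algebra_simps)
      moreover have "h (w*(k+cS)) = 1" using w cS by (simp add: h_def)
      ultimately show "fc (n - w*k) = h (w*(k+cS)) * fc (n + w*cS - w*(k+cS))" by simp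
    qed
    also have "\<dots> = (\<Sum>i\<in>?I. h i * fc (n + w*cS - i))"
      by (simp add: sum.reindex[OF injI])
    also have "\<dots> \<le> (\<Sum>i=0..n + w*cS. h i * fc (n + w*cS - i))"
      by (rule sum_mono2[OF _ sub]) (auto intro: mult_nonneg_nonneg fc0 simp: h01)
    also have "\<dots> = HT (n + w*cS)" by (simp add: HTn)
    also have "\<dots> \<le> 1" by (simp add: HT_def)
    finally show ?thesis .
  qed
  have gge: "HT n \<le> g n" for n
  proof -
    let ?I = "(\<lambda>k. w*k) ` {..n div w}"
    have sub: "?I \<subseteq> {0..n}"
    proof
      fix i assume "i \<in> ?I"
      then obtain k where k: "k \<le> n div w" "i = w*k" by auto
      have "w*k \<le> w*(n div w)" using k by simp
      also have "\<dots> \<le> n" by simp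
      finally show "i \<in> {0..n}" using k by simp
    qed
    have "HT n = (\<Sum>i\<in>?I. h i * fc (n - i))"
      unfolding HTn
    proof (rule sum.mono_neutral_right[OF _ sub])
      show "\<forall>i\<in>{0..n} - ?I. h i * fc (n - i) = 0"
      proof
        fix i assume i: "i \<in> {0..n} - ?I"
        have "\<not> w dvd i"
        proof
          assume "w dvd i" then obtain k where "i = w*k" by auto
          moreover have "k \<le> n div w" using i \<open>i = w*k\<close> w
            by (metis Diff_iff atLeastAtMost_iff div_le_mono nonzero_mult_div_cancel_left not_one_le_zero)
          ultimately show False using i by auto
        qed
        thus "h i * fc (n - i) = 0" by (simp add: h_def)
      qed
    qed simp
    also have "\<dots> \<le> (\<Sum>i\<in>?I. fc (n - i))"
      by (rule sum_mono) (metis h01 fc0 mult_left_le_one_le)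
    also have "\<dots> = g n" by (simp add: sum.reindex[OF inj] g_def)
    finally show ?thesis .
  qed
  have g01: "g n = 0 \<or> g n = 1" for n
  proof -
    have "g n \<ge> 0" unfolding g_def by (rule sum_nonneg) (simp add: fc0)
    thus ?thesis using gle[of n] by auto
  qed
  have gT: "g n = 1" if "n \<ge> cT" for n
    using gle[of n] gge[of n] cT that by (auto simp: HT_def)
  have grec: "g n = fc n + (if w \<le> n then g (n - w) else 0)" for n
  proof (cases "w \<le> n")
    case False
    thus ?thesis by (simp add: g_def)
  next
    case True
    have d: "n div w = Suc ((n - w) div w)" using True w
      by (intro le_div_geq) auto
    have "g n = fc n + (\<Sum>k\<le>(n - w) div w. fc (n - w*Suc k))"
      unfolding g_def d sum.atMost_Suc_shift by simp
    also have "(\<Sum>k\<le>(n - w) div w. fc (n - w*Suc k)) = g (n - w)"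
      unfolding g_def by (intro sum.cong refl) (simp add: algebra_simps)
    finally show ?thesis using True by simp
  qed
  define G where "G = Abs_fps g"
  have Gf: "G * (1 - fps_X ^ w) = fps_of_poly f"
  proof (rule fps_ext)
    fix n
    have "(G * (1 - fps_X ^ w)) $ n = g n - (if n < w then 0 else g (n - w))"
      by (simp add: algebra_simps fps_X_power_mult_right_nth G_def)
    also have "\<dots> = fc n" using grec[of n] by auto
    finally show "(G * (1 - fps_X ^ w)) $ n = fps_of_poly f $ n" by (simp add: fc_def)
  qed
  define q where "q n = g n - (if n = 0 then 0 else g (n - 1))" for n
  define Q where "Q = Poly (map q [0..<Suc cT])"
  have cQ: "coeff Q n = q n" for n
  proof (cases "n < Suc cT")
    case True thus ?thesis by (simp add: Q_def nth_default_def del: upt_Suc)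
  next
    case False
    hence "q n = 0" using gT[of n] gT[of "n-1"] by (simp add: q_def)
    thus ?thesis using False by (simp add: Q_def nth_default_def)
  qed
  have FQ: "fps_of_poly Q = (1 - fps_X) * G"
    by (rule fps_ext) (simp add: cQ q_def G_def algebra_simps)
  have X0: "(fps_X ^ w :: int fps) $ 0 = 0" using w by simp
  have comp: "semigroup_poly S oo fps_X ^ w = (1 - fps_X ^ w) * (hilbert_series S oo fps_X ^ w)"
    unfolding semigroup_poly_def fps_compose_mult_distrib[OF X0] fps_compose_sub_distrib
    using X0 by simp
  have main: "fps_of_poly Q * (semigroup_poly S oo fps_X ^ w) = semigroup_poly T"
  proof -
    have "fps_of_poly Q * (semigroup_poly S oo fps_X ^ w)
        = (1 - fps_X) * ((G * (1 - fps_X ^ w)) * (hilbert_series S oo fps_X ^ w))"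
      unfolding FQ comp by (simp add: algebra_simps)
    also have "\<dots> = semigroup_poly T"
      unfolding Gf semigroup_poly_def eq[symmetric] by (simp add: algebra_simps)
    finally show ?thesis .
  qed
  have g0: "g 0 = 1" using gge[of 0] gle[of 0] T by (simp add: HT_def numerical_semigroup_def)
  have Q0: "poly Q 0 = 1" by (simp add: poly_0_coeff_0 cQ q_def g0)
  have q01: "coeff Q i \<noteq> 0 \<longrightarrow> coeff Q i = 1 \<or> coeff Q i = -1" for i
    using g01[of i] g01[of "i-1"] by (auto simp: cQ q_def)
  have const: "g (i + m) = g i" if "\<forall>k. i < k \<and> k \<le> i + m \<longrightarrow> q k = 0" for i m
    using that
  proof (induction m)
    case 0 thus ?case by simp
  next
    case (Suc m)
    hence "g (i + m) = g i" by auto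
    moreover have "q (i + Suc m) = 0" using Suc.prems by auto
    ultimately show ?case by (simp add: q_def)
  qed
  have lead: "lead_coeff Q = 1"
  proof -
    let ?d = "degree Q"
    have "Q \<noteq> 0" using Q0 by auto
    hence nz: "q ?d \<noteq> 0" using cQ[of ?d] leading_coeff_0_iff by metis
    have "\<forall>k. ?d < k \<and> k \<le> ?d + cT \<longrightarrow> q k = 0"
      using cQ coeff_eq_0 by metis
    from const[OF this] have "g ?d = 1" using gT[of "?d + cT"] by simp
    thus ?thesis using nz g01[of "?d - 1"] by (auto simp: cQ q_def)
  qed
  have alt: "coeff Q j = - coeff Q i"
    if ij: "i < j" and nzi: "coeff Q i \<noteq> 0" and nzj: "coeff Q j \<noteq> 0"
      and z: "\<forall>k. i < k \<and> k < j \<longrightarrow> coeff Q k = 0" for i j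
  proof -
    have "\<forall>k. i < k \<and> k \<le> i + (j - 1 - i) \<longrightarrow> q k = 0" using z ij cQ by auto
    from const[OF this] have gj1: "g (j - 1) = g i" using ij by simp
    have qj: "q j = g j - g i" using gj1 ij by (simp add: q_def)
    show ?thesis
      using g01[of i] g01[of j] g01[of "i - 1"] nzi nzj qj by (auto simp: cQ q_def)
  qed
  show ?thesis
    apply (rule exI[of _ Q])
    using main Q0 lead q01 alt by blast
qed

end
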